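(* Let $A$ be a $d$-dimensional polystochastic matrix of order $4$. Suppose that for some tuple $\mathcal{E}\in\{1,2,3\}^d$ and some $y\in\{0,1\}^d$ the subcube $C_y$ of the partition defined by $\mathcal{E}$ satisfies $w(C_y)=0$ or $w(C_y)=2^{d-1}$. Then every line of $A$ contains at most two nonzero entries.
   Context: $A=(a_\alpha)_{\alpha\in\{0,1,2,3\}^d}$; a line is the set of indices obtained by fixing all coordinates but one; $A$ is polystochastic if it is nonnegative and every line sums to $1$. Define $p_1,p_2,p_3:\{0,1,2,3\}\to\{0,1\}$ by $p_1(0)=p_1(1)=0$, $p_1(2)=p_1(3)=1$; $p_2(0)=p_2(2)=0$, $p_2(1)=p_2(3)=1$; $p_3(0)=p_3(3)=0$, $p_3(1)=p_3(2)=1$. For $\mathcal{E}=(\varepsilon_1,\dots,\varepsilon_d)\in\{1,2,3\}^d$ and $y\in\{0,1\}^d$, the subcube $C_y$ is the submatrix of $A$ on the index set $\{\alpha: p_{\varepsilon_i}(\alpha_i)=y_i \text{ for all } i\}$ (a $d$-dimensional submatrix of order $2$). The weight $w(C)$ of a nonnegative matrix $C$ is the sum of its entries. *)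

theory Defs
  imports Complex_Main
begin

text \<open>Multi-indices alpha in {0,1,2,3}^d, represented as functions nat => nat
  with alpha i < 4 for i < d and alpha i = 0 for i >= d (canonical padding).\<close>
definition idx :: "nat \<Rightarrow> (nat \<Rightarrow> nat) set" where
  "idx d = {\<alpha>. (\<forall>i<d. \<alpha> i < 4) \<and> (\<forall>i\<ge>d. \<alpha> i = 0)}"

definition line :: "nat \<Rightarrow> (nat \<Rightarrow> nat) \<Rightarrow> (nat \<Rightarrow> nat) set" where
  "line i \<alpha> = (\<lambda>k. \<alpha>(i := k)) ` {..<4}"

definition polystochastic :: "nat \<Rightarrow> ((nat \<Rightarrow> nat) \<Rightarrow> real) \<Rightarrow> bool" where
  "polystochastic d A \<longleftrightarrow>
     (\<forall>\<alpha>\<in>idx d. A \<alpha> \<ge> 0) \<and>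
     (\<forall>i<d. \<forall>\<alpha>\<in>idx d. (\<Sum>\<beta>\<in>line i \<alpha>. A \<beta>) = 1)"

fun p :: "nat \<Rightarrow> nat \<Rightarrow> nat" where
  "p (Suc 0) x = (if x = 2 \<or> x = 3 then 1 else 0)"
| "p (Suc (Suc 0)) x = (if x = 1 \<or> x = 3 then 1 else 0)"
| "p (Suc (Suc (Suc 0))) x = (if x = 1 \<or> x = 2 then 1 else 0)"
| "p _ x = 0"

definition subcube :: "nat \<Rightarrow> (nat \<Rightarrow> nat) \<Rightarrow> (nat \<Rightarrow> nat) \<Rightarrow> (nat \<Rightarrow> nat) set" where
  "subcube d E y = {\<alpha>\<in>idx d. \<forall>i<d. p (E i) (\<alpha> i) = y i}"

definition weight :: "((nat \<Rightarrow> nat) \<Rightarrow> real) \<Rightarrow> (nat \<Rightarrow> nat) set \<Rightarrow> real" where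
  "weight A S = (\<Sum>\<alpha>\<in>S. A \<alpha>)"

end

theory Submission
  imports Defs
begin

definition T :: "nat set \<Rightarrow> (nat \<Rightarrow> nat set) \<Rightarrow> (nat \<Rightarrow> nat) set" where
  "T I S = {\<gamma>. (\<forall>j\<in>I. \<gamma> j \<in> S j) \<and> (\<forall>j. j \<notin> I \<longrightarrow> \<gamma> j = 0)}"

lemma card_T:
  assumes "finite I" "\<forall>j\<in>I. finite (S j)"
  shows "finite (T I S) \<and> card (T I S) = (\<Prod>j\<in>I. card (S j))"
  using assms
proof (induction I rule: finite_induct)
  case empty
  have "T {} S = {\<lambda>_. 0}" by (auto simp: T_def)
  then show ?case by simp
next
  case (insert k I)
  have eq: "T (insert k I) S = (\<lambda>(\<gamma>,a). \<gamma>(k:=a)) ` (T I S \<times> S k)"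
  proof
    show "T (insert k I) S \<subseteq> (\<lambda>(\<gamma>,a). \<gamma>(k:=a)) ` (T I S \<times> S k)"
    proof
      fix \<gamma> assume g: "\<gamma> \<in> T (insert k I) S"
      have "\<gamma> = (\<lambda>(\<gamma>,a). \<gamma>(k:=a)) (\<gamma>(k:=0), \<gamma> k)" by simp
      moreover have "(\<gamma>(k:=0), \<gamma> k) \<in> T I S \<times> S k" using g insert.hyps by (auto simp: T_def)
      ultimately show "\<gamma> \<in> (\<lambda>(\<gamma>,a). \<gamma>(k:=a)) ` (T I S \<times> S k)" by blast
    qed
    show "(\<lambda>(\<gamma>,a). \<gamma>(k:=a)) ` (T I S \<times> S k) \<subseteq> T (insert k I) S"
      using insert.hyps by (auto simp: T_def)
  qed
  have inj: "inj_on (\<lambda>(\<gamma>,a). \<gamma>(k:=a)) (T I S \<times> S k)"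
  proof (rule inj_onI, clarsimp)
    fix g a g' a' assume g: "g \<in> T I S" "g' \<in> T I S" and e: "g(k := a) = g'(k := a')"
    have "a = a'" using fun_cong[OF e, of k] by simp
    moreover have "g = g'"
    proof
      fix j show "g j = g' j"
        using fun_cong[OF e, of j] g insert.hyps by (cases "j = k") (auto simp: T_def)
    qed
    ultimately show "g = g' \<and> a = a'" by simp
  qed
  have fin: "finite (T I S)" "finite (S k)" using insert by auto
  have "card (T (insert k I) S) = card (T I S) * card (S k)"
    unfolding eq using card_image[OF inj] card_cartesian_product by simp
  then show ?case using insert fin eq by (simp add: mult.commute)
qed

lemma idx_T: "idx d = T {..<d} (\<lambda>_. {..<4})" by (auto simp: idx_def T_def)

lemma fin_idx: "finite (idx d)"
  using card_T[of "{..<d}" "\<lambda>_. {..<4}"] idx_T by simp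

lemma p01: "p e a \<in> {0,1}" by (cases "(e,a)" rule: p.cases) auto

lemma pdef: "p e a = (if e = 1 then (if a=2 \<or> a=3 then 1 else 0) else if e=2 then (if a=1\<or>a=3 then 1 else 0) else if e=3 then (if a=1\<or>a=2 then 1 else 0) else 0)"
  by (cases "(e,a)" rule: p.cases) (auto simp: numeral_2_eq_2 numeral_3_eq_3)

lemma pS: assumes "e \<in> {1,2,3}" "b \<in> {0,1::nat}"
  shows "card {a. a<4 \<and> p e a = b} = 2"
proof -
  have e: "e = 1 \<or> e = 2 \<or> e = 3" and b: "b = 0 \<or> b = 1" using assms by auto
  show ?thesis
    using e b
  proof (elim disjE)
    assume "e = 1" "b = 0" then have "{a. a<4 \<and> p e a = b} = {0,1}" by (auto simp: pdef)
    then show ?thesis by simp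
  next
    assume "e = 1" "b = 1" then have "{a. a<4 \<and> p e a = b} = {2,3}" by (auto simp: pdef)
    then show ?thesis by simp
  next
    assume "e = 2" "b = 0" then have "{a. a<4 \<and> p e a = b} = {0,2}" by (auto simp: pdef)
    then show ?thesis by simp
  next
    assume "e = 2" "b = 1" then have "{a. a<4 \<and> p e a = b} = {1,3}" by (auto simp: pdef)
    then show ?thesis by simp
  next
    assume "e = 3" "b = 0" then have "{a. a<4 \<and> p e a = b} = {0,3}" by (auto simp: pdef)
    then show ?thesis by simp
  next
    assume "e = 3" "b = 1" then have "{a. a<4 \<and> p e a = b} = {1,2}" by (auto simp: pdef)
    then show ?thesis by simp
  qed
qed

lemma region:
  assumes P: "polystochastic d A" and E: "\<forall>i<d. E i \<in> {1, 2, 3}"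
    and Y: "\<forall>j<d. y' j \<in> {0,1}" and i: "i < d"
  shows "weight A (subcube d E y') + weight A (subcube d E (y'(i := 1 - y' i))) = 2^(d-1)"
proof -
  define R where "R = {\<beta>\<in>idx d. \<forall>j<d. j\<noteq>i \<longrightarrow> p (E j) (\<beta> j) = y' j}"
  have RU: "R = subcube d E y' \<union> subcube d E (y'(i := 1 - y' i))"
  proof -
    have "y' i \<in> {0,1}" using Y i by auto
    show ?thesis
    proof
      show "R \<subseteq> subcube d E y' \<union> subcube d E (y'(i := 1 - y' i))"
      proof
        fix \<beta> assume b: "\<beta> \<in> R"
        have "p (E i) (\<beta> i) \<in> {0,1}" by (rule p01)
        then have "p (E i) (\<beta> i) = y' i \<or> p (E i) (\<beta> i) = 1 - y' i"
          using \<open>y' i \<in> {0,1}\<close> by auto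
        then show "\<beta> \<in> subcube d E y' \<union> subcube d E (y'(i := 1 - y' i))"
        proof (elim disjE)
          assume h: "p (E i) (\<beta> i) = y' i"
          have "\<forall>j<d. p (E j) (\<beta> j) = y' j"
          proof (intro allI impI)
            fix j assume "j < d" then show "p (E j) (\<beta> j) = y' j"
              using b h unfolding R_def by (cases "j = i") auto
          qed
          then have "\<beta> \<in> subcube d E y'" using b unfolding R_def subcube_def by auto
          then show ?thesis by simp
        next
          assume h: "p (E i) (\<beta> i) = 1 - y' i"
          have "\<beta> \<in> subcube d E (y'(i := 1 - y' i))" using b h unfolding R_def subcube_def by auto
          then show ?thesis by simp
        qed
      qed
      show "subcube d E y' \<union> subcube d E (y'(i := 1 - y' i)) \<subseteq> R"
        unfolding R_def subcube_def by auto
    qed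
  qed
  have dis: "subcube d E y' \<inter> subcube d E (y'(i := 1 - y' i)) = {}"
    using Y i unfolding subcube_def by auto
  have finS: "finite (subcube d E z)" for z
    using fin_idx by (rule rev_finite_subset) (auto simp: subcube_def)
  define S where "S = (\<lambda>j. {a. a<4 \<and> p (E j) a = y' j})"
  define G where "G = T ({..<d}-{i}) S"
  have finSj: "\<forall>j\<in>{..<d}-{i}. finite (S j)" unfolding S_def by auto
  have cG: "finite G \<and> card G = 2^(d-1)"
  proof -
    have "(\<Prod>j\<in>{..<d}-{i}. card (S j)) = (\<Prod>j\<in>{..<d}-{i}. 2)"
      using pS E Y unfolding S_def by (intro prod.cong) auto
    also have "\<dots> = 2^(d-1)" using i by simp
    finally show ?thesis using card_T[of "{..<d}-{i}" S] finSj unfolding G_def by simp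
  qed
  have Gidx: "\<gamma> \<in> idx d" "\<gamma> i = 0" if "\<gamma> \<in> G" for \<gamma>
    using that i unfolding G_def T_def S_def idx_def by auto
  have RUN: "R = (\<Union>\<gamma>\<in>G. line i \<gamma>)"
  proof
    show "R \<subseteq> (\<Union>\<gamma>\<in>G. line i \<gamma>)"
    proof
      fix \<beta> assume b: "\<beta> \<in> R"
      have "\<beta>(i:=0) \<in> G" using b i unfolding R_def G_def T_def S_def idx_def by auto
      moreover have "\<beta> \<in> line i (\<beta>(i:=0))" unfolding line_def
        using b i unfolding R_def idx_def by (auto intro!: image_eqI[where x="\<beta> i"])
      ultimately show "\<beta> \<in> (\<Union>\<gamma>\<in>G. line i \<gamma>)" by blast
    qed
    show "(\<Union>\<gamma>\<in>G. line i \<gamma>) \<subseteq> R"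
      using i unfolding R_def G_def T_def S_def idx_def line_def by auto
  qed
  have "weight A R = (\<Sum>\<gamma>\<in>G. (\<Sum>\<beta>\<in>line i \<gamma>. A \<beta>))"
    unfolding weight_def RUN
  proof (rule sum.UNION_disjoint)
    show "finite G" using cG by simp
    show "\<forall>\<gamma>\<in>G. finite (line i \<gamma>)" unfolding line_def by auto
    show "\<forall>\<gamma>\<in>G. \<forall>\<gamma>'\<in>G. \<gamma> \<noteq> \<gamma>' \<longrightarrow> line i \<gamma> \<inter> line i \<gamma>' = {}"
    proof (intro ballI impI)
      fix g g' assume g: "g \<in> G" "g' \<in> G" "g \<noteq> g'"
      show "line i g \<inter> line i g' = {}"
      proof (rule ccontr)
        assume "line i g \<inter> line i g' \<noteq> {}"
        then obtain k k' where e: "g(i:=k) = g'(i:=k')" unfolding line_def by auto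
        have "g = g'"
        proof
          fix j show "g j = g' j"
            using fun_cong[OF e, of j] Gidx(2)[OF g(1)] Gidx(2)[OF g(2)] by (cases "j = i") auto
        qed
        then show False using g by simp
      qed
    qed
  qed
  also have "\<dots> = (\<Sum>\<gamma>\<in>G. 1)"
    using P Gidx i unfolding polystochastic_def by (intro sum.cong) auto
  also have "\<dots> = 2^(d-1)" using cG by simp
  finally have "weight A R = 2^(d-1)" .
  moreover have "weight A R = weight A (subcube d E y') + weight A (subcube d E (y'(i := 1 - y' i)))"
    unfolding RU weight_def by (rule sum.union_disjoint[OF finS finS dis])
  ultimately show ?thesis by simp
qed

definition flip :: "(nat \<Rightarrow> nat) \<Rightarrow> nat set \<Rightarrow> nat \<Rightarrow> nat" where
  "flip y K = (\<lambda>j. if j \<in> K then 1 - y j else y j)"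

lemma flipw:
  assumes P: "polystochastic d A" and E: "\<forall>i<d. E i \<in> {1, 2, 3}"
    and Y: "\<forall>j<d. y j \<in> {0,1}" and K: "K \<subseteq> {..<d}"
  shows "weight A (subcube d E (flip y K)) = (if even (card K) then weight A (subcube d E y)
           else 2^(d-1) - weight A (subcube d E y))"
proof -
  have "finite K" using K finite_subset by blast
  then show ?thesis using K
  proof (induction K rule: finite_induct)
    case empty
    then show ?case by (simp add: flip_def)
  next
    case (insert k K)
    have e: "flip y (insert k K) = (flip y K)(k := 1 - flip y K k)"
      using insert.hyps by (auto simp: flip_def)
    have Y': "\<forall>j<d. flip y K j \<in> {0,1}" using Y by (auto simp: flip_def)
    have "k < d" using insert by auto
    from region[OF P E Y' this] have
      "weight A (subcube d E (flip y (insert k K))) = 2^(d-1) - weight A (subcube d E (flip y K))"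
      unfolding e by simp
    then show ?case using insert by auto
  qed
qed

theorem mainTheorem6:
  fixes d :: nat and A :: "(nat \<Rightarrow> nat) \<Rightarrow> real" and E y :: "nat \<Rightarrow> nat"
  assumes "polystochastic d A"
    and "\<forall>i<d. E i \<in> {1, 2, 3}"
    and "\<forall>i<d. y i \<in> {0, 1}"
    and "weight A (subcube d E y) = 0 \<or> weight A (subcube d E y) = 2 ^ (d - 1)"
  shows "\<forall>i<d. \<forall>\<alpha>\<in>idx d. card {\<beta>\<in>line i \<alpha>. A \<beta> \<noteq> 0} \<le> 2"
proof (intro allI impI ballI)
  fix i \<alpha> assume i: "i < d" and a: "\<alpha> \<in> idx d"
  note P = assms(1) and E = assms(2) and Y = assms(3)
  define W where "W = weight A (subcube d E y)"
  define K where "K = {j. j<d \<and> j\<noteq>i \<and> p (E j) (\<alpha> j) \<noteq> y j}"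
  have K1: "K \<subseteq> {..<d}" "insert i K \<subseteq> {..<d}" using i by (auto simp: K_def)
  have iK: "i \<notin> K" by (simp add: K_def)
  have fK: "finite K" using K1 finite_subset by blast
  have cK: "card (insert i K) = Suc (card K)" using iK fK by simp
  have wA: "weight A (subcube d E (flip y K)) = (if even (card K) then W else 2^(d-1) - W)"
    unfolding W_def by (rule flipw[OF P E Y K1(1)])
  have wB: "weight A (subcube d E (flip y (insert i K))) = (if even (card K) then 2^(d-1) - W else W)"
    using flipw[OF P E Y K1(2)] unfolding cK W_def by simp
  have W: "W = 0 \<or> W = 2^(d-1)" using assms(4) unfolding W_def .
  have "weight A (subcube d E (flip y K)) = 0 \<or> weight A (subcube d E (flip y (insert i K))) = 0"
  proof (cases "even (card K)")
    case True
    then show ?thesis using wA wB W by auto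
  next
    case False
    then show ?thesis using wA wB W by auto
  qed
  then obtain z where zw: "weight A (subcube d E z) = 0" and
    zK: "z = flip y K \<or> z = flip y (insert i K)" by blast
  have zj: "z j = (if j \<in> K then 1 - y j else y j)" if "j \<noteq> i" for j
    using zK that unfolding flip_def by auto
  have zi: "z i \<in> {0,1}"
  proof -
    have "z i = y i \<or> z i = 1 - y i" using zK iK unfolding flip_def by auto
    then show ?thesis using Y i by auto
  qed
  have finS: "finite (subcube d E z)"
    using fin_idx by (rule rev_finite_subset) (auto simp: subcube_def)
  have nn: "\<And>x. x\<in>subcube d E z \<Longrightarrow> 0 \<le> A x" using P unfolding polystochastic_def subcube_def by auto
  have zero: "\<forall>x\<in>subcube d E z. A x = 0"
    using zw sum_nonneg_eq_0_iff[OF finS nn] unfolding weight_def by simp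
  have mem: "\<alpha>(i:=k) \<in> subcube d E z" if "k<4" "p (E i) k = z i" for k
  proof -
    have "\<alpha>(i:=k) \<in> idx d" using a that i by (auto simp: idx_def)
    moreover have "p (E j) ((\<alpha>(i:=k)) j) = z j" if j: "j<d" for j
    proof (cases "j = i")
      case True then show ?thesis using \<open>p (E i) k = z i\<close> by simp
    next
      case False
      have pj: "p (E j) (\<alpha> j) \<in> {0,1}" "y j \<in> {0,1}" using p01 Y j by auto
      show ?thesis
      proof (cases "j \<in> K")
        case True
        then have "p (E j) (\<alpha> j) \<noteq> y j" by (simp add: K_def)
        then have "p (E j) (\<alpha> j) = 1 - y j" using pj by auto
        then show ?thesis using zj[OF False] True False by simp
      next
        case nK: False
        then have "p (E j) (\<alpha> j) = y j" using j False by (simp add: K_def)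
        then show ?thesis using zj[OF False] nK False by simp
      qed
    qed
    ultimately show ?thesis unfolding subcube_def by blast
  qed
  define M where "M = {k. k<4 \<and> p (E i) k = 1 - z i}"
  have sub: "{\<beta>\<in>line i \<alpha>. A \<beta> \<noteq> 0} \<subseteq> (\<lambda>k. \<alpha>(i:=k)) ` M"
  proof
    fix \<beta> assume b: "\<beta> \<in> {\<beta>\<in>line i \<alpha>. A \<beta> \<noteq> 0}"
    then obtain k where k: "k<4" "\<beta> = \<alpha>(i:=k)" unfolding line_def by auto
    have "A \<beta> \<noteq> 0" using b by simp
    then have "p (E i) k \<noteq> z i" using mem[OF k(1)] zero k(2) by blast
    then have "p (E i) k = 1 - z i" using p01[of "E i" k] zi by auto
    then show "\<beta> \<in> (\<lambda>k. \<alpha>(i:=k)) ` M" using k unfolding M_def by blast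
  qed
  have finM: "finite M" unfolding M_def by simp
  have cM: "card M = 2" unfolding M_def using pS E i zi by auto
  have "card {\<beta>\<in>line i \<alpha>. A \<beta> \<noteq> 0} \<le> card ((\<lambda>k. \<alpha>(i:=k)) ` M)"
    by (rule card_mono[OF finite_imageI[OF finM] sub])
  also have "\<dots> \<le> card M" by (rule card_image_le[OF finM])
  finally show "card {\<beta>\<in>line i \<alpha>. A \<beta> \<noteq> 0} \<le> 2" using cM by simp
qed

end
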